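(* Let $U\subset\mathbb C$ be a convex domain bounded by a smooth Jordan curve, and let $f$ be holomorphic in a neighborhood of $\overline U$ with $\operatorname{Re}(f')>0$ in $U$ and $f(z)\ne z$ for all $z\in\partial U$. Let $\omega_f$ be the Buff form of $f$. For $z\in U\cap f^{-1}(U)$ with $f(z)\ne z$ and $0\le t\le1$ let $z_t=(1-t)z+tf(z)$ and $$u_{f,t}(z)=-t+\int_{[z,z_t]}\omega_f(s)\,ds.$$ Suppose $p\in U$ is a fixed point of $f$ with $f'(p)=1$ and fixed point multiplicity $q+1\ge2$. Then for every $0<\epsilon<1$ there is $r>0$ such that $|u_{f,t}(z)|<\epsilon t$ for all $z\in\mathbb D(p,r)$ with $f(z)\ne z$ and all $0<t\le1$. Consequently, if $z\in\mathbb D(p,r)$ is not fixed by $f$, the curve $t\mapsto z_t$ parametrizing $[z,f(z)]$ lifts under the rectifying coordinate $\phi_f$ to a curve $t\mapsto Z_t$ satisfying $|Z_t-(Z_0+t)|<\epsilon t$ for $0<t\le 1$.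
   Context: $\operatorname{Log}$ is the principal branch of the logarithm. The Buff form of $f$ is $\omega_f=\frac{f'(z)-1}{(f(z)-z)\operatorname{Log} f'(z)}\,dz$ (the factor $(f'-1)/\operatorname{Log}f'$ being $1$ where $f'=1$), meromorphic with poles at fixed points of $f$. The rectifying coordinate $\phi_f$ is the multi-valued primitive of $\omega_f$; a lift of a curve avoiding fixed points is obtained by analytic continuation of a branch of $\phi_f$ along it, so $Z_t=Z_0+\int_{[z,z_t]}\omega_f$. The segment $[z,f(z)]$ contains no fixed point of $f$ when $z\in U\cap f^{-1}(U)$ is not fixed. *)

theory Defs
  imports "HOL-Complex_Analysis.Complex_Analysis"
begin

definition vderiv :: "(real \<Rightarrow> complex) \<Rightarrow> real \<Rightarrow> complex" where
  "vderiv g = (\<lambda>t. vector_derivative g (at t))"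

definition smooth_jordan_boundary :: "complex set \<Rightarrow> bool" where
  "smooth_jordan_boundary U \<longleftrightarrow>
     (\<exists>g :: real \<Rightarrow> complex.
        (\<forall>n t. (vderiv ^^ n) g differentiable (at t)) \<and>
        (\<forall>t. vderiv g t \<noteq> 0) \<and>
        (\<forall>t. g (t + 1) = g t) \<and>
        inj_on g {0..<1} \<and>
        g ` {0..1} = frontier U)"

definition buff_factor :: "complex \<Rightarrow> complex" where
  "buff_factor w = (if w = 1 then 1 else (w - 1) / Ln w)"

text \<open>Coefficient of the Buff form omega_f = buff_form f z dz.\<close>
definition buff_form :: "(complex \<Rightarrow> complex) \<Rightarrow> complex \<Rightarrow> complex" where
  "buff_form f z = buff_factor (deriv f z) / (f z - z)"

definition seg_pt :: "(complex \<Rightarrow> complex) \<Rightarrow> complex \<Rightarrow> real \<Rightarrow> complex" where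
  "seg_pt f z t = (1 - of_real t) * z + of_real t * f z"

definition u_ft :: "(complex \<Rightarrow> complex) \<Rightarrow> real \<Rightarrow> complex \<Rightarrow> complex" where
  "u_ft f t z = - of_real t + contour_integral (linepath z (seg_pt f z t)) (buff_form f)"

text \<open>Z is a lift of the curve gamma on [0,1] under the (multivalued) primitive of
 the form omega = w(z) dz: Z is continuous and near each parameter it agrees with
 a local holomorphic branch of a primitive of w composed with gamma
 (i.e. Z is obtained by analytic continuation of a branch along gamma).\<close>
definition is_lift :: "(complex \<Rightarrow> complex) \<Rightarrow> (real \<Rightarrow> complex) \<Rightarrow> (real \<Rightarrow> complex) \<Rightarrow> bool" where
  "is_lift w \<gamma> Z \<longleftrightarrow> continuous_on {0..1} Z \<and>
     (\<forall>t\<in>{0..1}. \<exists>V \<Phi>. open V \<and> \<gamma> t \<in> V \<and>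
        (\<forall>y\<in>V. (\<Phi> has_field_derivative w y) (at y)) \<and>
        (\<exists>e>0. \<forall>s\<in>{0..1}. \<bar>s - t\<bar> < e \<longrightarrow> \<gamma> s \<in> V \<and> Z s = \<Phi> (\<gamma> s)))"

end

theory Submission
  imports Defs
begin


lemma bf_lim: "(buff_factor \<longlongrightarrow> 1) (at 1)"
proof -
  have "(Ln has_field_derivative inverse 1) (at 1)"
    by (rule has_field_derivative_Ln) auto
  then have "((\<lambda>y. (Ln y - Ln 1) / (y - 1)) \<longlongrightarrow> 1) (at 1)"
    by (simp add: has_field_derivative_iff)
  then have "((\<lambda>y. inverse (Ln y / (y - 1))) \<longlongrightarrow> inverse 1) (at 1)"
    by (intro tendsto_inverse) auto
  then have "((\<lambda>y. inverse (Ln y / (y - 1))) \<longlongrightarrow> 1) (at 1)" by simp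
  moreover have "\<forall>\<^sub>F y in at 1. inverse (Ln y / (y - 1)) = buff_factor y"
    by (auto simp: eventually_at_filter buff_factor_def)
  ultimately show ?thesis by (rule Lim_transform_eventually)
qed

lemma bf_cont: "isCont buff_factor 1"
  using bf_lim by (simp add: isCont_def buff_factor_def)



lemma bf_holo: "buff_factor holomorphic_on ball 1 (1/2)"
proof (rule no_isolated_singularity'[where K="{1}"])
  show "(buff_factor \<longlongrightarrow> buff_factor z) (at z within ball 1 (1/2))" if "z \<in> {1}" for z
    using that tendsto_within_subset[OF bf_lim, of "ball 1 (1/2)"] by (simp add: buff_factor_def)
  have re: "Re v > 0" if "v \<in> ball 1 (1/2)" for v :: complex
  proof -
    have "\<bar>Re (1 - v)\<bar> < 1/2" using that abs_Re_le_cmod[of "1 - v"] by (simp add: dist_norm)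
    then show ?thesis using abs_ge_self[of "1 - Re v"] by simp
  qed
  have ln0: "Ln v \<noteq> 0" if "v \<in> ball 1 (1/2) - {1}" for v :: complex
    using that re by (metis DiffD1 DiffD2 exp_Ln exp_zero insertI1 less_irrefl zero_complex.simps(1))
  have nr: "v \<notin> \<real>\<^sub>\<le>\<^sub>0" if "v \<in> ball 1 (1/2) - {1}" for v :: complex
    using that re[of v] by (auto simp: complex_nonpos_Reals_iff)
  have "(\<lambda>v. (v - 1) / Ln v) holomorphic_on (ball 1 (1/2) - {1})"
    using ln0 nr by (intro holomorphic_intros holomorphic_on_Ln) auto
  then show "buff_factor holomorphic_on (ball 1 (1/2) - {1})"
    by (rule holomorphic_transform) (auto simp: buff_factor_def)
qed auto


lemma alg:
  fixes b gx gz :: complex and e \<eta> :: real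
  assumes "gz \<noteq> 0" "norm (b - 1) \<le> e/8" "norm (gx - gz) \<le> \<eta> * norm gz" "\<eta> \<le> 1/2" "\<eta> \<le> e/8"
  shows "norm (b/gx - 1/gz) \<le> (e/2)/norm gz"
proof -
  have ngz: "norm gz > 0" using assms by simp
  have "norm gz \<le> norm gx + norm (gx - gz)"
    using norm_triangle_ineq4[of gx "gx - gz"] by simp
  moreover have "\<eta> * norm gz \<le> 1/2 * norm gz"
    using assms(4) ngz by (intro mult_right_mono) auto
  ultimately have gx: "norm gx \<ge> norm gz / 2" using assms(3) by linarith
  then have gx0: "gx \<noteq> 0" using ngz by auto
  have eq: "b/gx - 1/gz = ((b - 1) * gz + (gz - gx)) / (gx * gz)"
    using gx0 assms(1) by (simp add: field_simps)
  have "norm ((b - 1) * gz + (gz - gx)) \<le> norm (b - 1) * norm gz + norm (gz - gx)"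
    by (metis norm_mult norm_triangle_ineq)
  also have "norm (b - 1) * norm gz \<le> e/8 * norm gz"
    using assms(2) ngz by (intro mult_right_mono) auto
  moreover have "norm (gz - gx) \<le> e/8 * norm gz"
    using assms(3,5) ngz by (metis norm_minus_commute order_trans mult_right_mono norm_ge_zero)
  ultimately have num: "norm ((b - 1) * gz + (gz - gx)) \<le> e/4 * norm gz" by simp
  have "norm (b/gx - 1/gz) = norm ((b - 1) * gz + (gz - gx)) / (norm gx * norm gz)"
    by (simp add: eq norm_divide norm_mult)
  also have "\<dots> \<le> (e/4 * norm gz) / (norm gz / 2 * norm gz)"
    apply (rule frac_le)
    subgoal using num norm_ge_zero[of "(b - 1) * gz + (gz - gx)"] by linarith
    subgoal using num by simp
    subgoal using ngz by simp
    subgoal using gx ngz by (intro mult_right_mono) auto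
    done
  also have "\<dots> = (e/2)/norm gz" using ngz by (simp add: field_simps)
  finally show ?thesis .
qed


theorem lemma3p5:
  fixes U :: "complex set" and f :: "complex \<Rightarrow> complex" and p :: complex and q :: nat
  assumes "open U" and "connected U" and "convex U" and "bounded U" and "U \<noteq> {}"
    and "smooth_jordan_boundary U"
    and "\<exists>W. open W \<and> closure U \<subseteq> W \<and> f holomorphic_on W"
    and "\<forall>z\<in>U. Re (deriv f z) > 0"
    and "\<forall>z\<in>frontier U. f z \<noteq> z"
    and "p \<in> U" and "f p = p" and "deriv f p = 1"
    and "q \<ge> 1" and "zorder (\<lambda>z. f z - z) p = int q + 1"
  shows "\<forall>\<epsilon>. 0 < \<epsilon> \<and> \<epsilon> < 1 \<longrightarrow>
           (\<exists>r>0. ball p r \<subseteq> U \<inter> f -` U \<and>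
             (\<forall>z\<in>ball p r. f z \<noteq> z \<longrightarrow>
                (\<forall>t\<in>{0<..1}. cmod (u_ft f t z) < \<epsilon> * t) \<and>
                (\<exists>Z. is_lift (buff_form f) (seg_pt f z) Z) \<and>
                (\<forall>Z. is_lift (buff_form f) (seg_pt f z) Z \<longrightarrow>
                   (\<forall>t\<in>{0<..1}. cmod (Z t - (Z 0 + of_real t)) < \<epsilon> * t))))"
proof (intro allI impI)
  fix \<epsilon> :: real assume eps: "0 < \<epsilon> \<and> \<epsilon> < 1"
  obtain W where W: "open W" "closure U \<subseteq> W" "f holomorphic_on W" using assms(7) by blast
  have holU: "f holomorphic_on U" using W closure_subset holomorphic_on_subset by blast
  have fder: "(f has_field_derivative deriv f x) (at x)" if "x \<in> U" for x
    using holU assms(1) that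
    by (meson DERIV_deriv_iff_field_differentiable holomorphic_on_imp_differentiable_at)
  have dholo: "deriv f holomorphic_on U" using holU assms(1) by (rule holomorphic_deriv)
  have contd: "isCont (deriv f) p"
    using dholo assms(1,10) holomorphic_on_imp_continuous_on continuous_on_eq_continuous_at by blast
  have contf: "isCont f p" using fder[OF assms(10)] DERIV_isCont by blast
  have "\<epsilon>/8 > 0" using eps by simp
  then obtain \<eta>1 where \<eta>1: "\<eta>1 > 0" "\<And>v. dist v 1 < \<eta>1 \<Longrightarrow> dist (buff_factor v) 1 < \<epsilon>/8"
    using bf_cont unfolding continuous_at_eps_delta by (metis buff_factor_def)
  define \<eta> where "\<eta> = min (min \<eta>1 (1/2)) (\<epsilon>/8)"
  have \<eta>: "\<eta> > 0" "\<eta> \<le> 1/2" "\<eta> \<le> \<epsilon>/8" "\<eta> \<le> \<eta>1" using \<eta>1 eps by (auto simp: \<eta>_def)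
  obtain \<delta>0 where \<delta>0: "\<delta>0 > 0" "\<And>x. dist x p < \<delta>0 \<Longrightarrow> dist (deriv f x) (deriv f p) < \<eta>"
    using contd \<eta>(1) unfolding continuous_at_eps_delta by blast
  obtain \<delta>1 where \<delta>1: "\<delta>1 > 0" "ball p \<delta>1 \<subseteq> U" using assms(1,10) openE by blast
  define \<delta> where "\<delta> = min \<delta>0 \<delta>1"
  have \<delta>: "\<delta> > 0" "ball p \<delta> \<subseteq> U" using \<delta>0 \<delta>1 by (auto simp: \<delta>_def)
  have d\<eta>: "norm (deriv f x - 1) < \<eta>" if "x \<in> ball p \<delta>" for x
    using that \<delta>0(2)[of x] assms(12) by (auto simp: \<delta>_def dist_norm norm_minus_commute)
  obtain r0 where r0: "r0 > 0" "\<And>x. dist x p < r0 \<Longrightarrow> dist (f x) (f p) < \<delta>"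
    using contf \<delta>(1) unfolding continuous_at_eps_delta by blast
  define r where "r = min r0 \<delta>"
  have fin: "f x \<in> ball p \<delta>" if "x \<in> ball p r" for x
    using that r0(2)[of x] assms(11) by (auto simp: r_def dist_commute)
  have rin: "ball p r \<subseteq> ball p \<delta>" by (auto simp: r_def)
  have lip: "norm ((f x - x) - (f y - y)) \<le> \<eta> * norm (x - y)" if "x \<in> ball p \<delta>" "y \<in> ball p \<delta>" for x y
  proof (rule field_differentiable_bound[OF convex_ball, of p \<delta> "\<lambda>x. f x - x" "\<lambda>x. deriv f x - 1"])
    fix w assume "w \<in> ball p \<delta>"
    then have "w \<in> U" using \<delta> by blast
    show "((\<lambda>x. f x - x) has_field_derivative deriv f w - 1) (at w within ball p \<delta>)"
      by (rule has_field_derivative_at_within, rule DERIV_diff[OF fder[OF \<open>w \<in> U\<close>] DERIV_ident])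
    show "norm (deriv f w - 1) \<le> \<eta>" using d\<eta>[OF \<open>w \<in> ball p \<delta>\<close>] by simp
  qed (use that in auto)
  show "\<exists>r>0. ball p r \<subseteq> U \<inter> f -` U \<and>
             (\<forall>z\<in>ball p r. f z \<noteq> z \<longrightarrow>
                (\<forall>t\<in>{0<..1}. cmod (u_ft f t z) < \<epsilon> * t) \<and>
                (\<exists>Z. is_lift (buff_form f) (seg_pt f z) Z) \<and>
                (\<forall>Z. is_lift (buff_form f) (seg_pt f z) Z \<longrightarrow>
                   (\<forall>t\<in>{0<..1}. cmod (Z t - (Z 0 + of_real t)) < \<epsilon> * t)))"
  proof (intro exI[of _ r] conjI ballI impI)
    show "r > 0" using r0 \<delta> by (simp add: r_def)
    show "ball p r \<subseteq> U \<inter> f -` U" using fin rin \<delta>(2) by blast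
    fix z assume z: "z \<in> ball p r" and nf: "f z \<noteq> z"
    define gz where "gz = f z - z"
    have gz0: "gz \<noteq> 0" "norm gz > 0" using nf by (auto simp: gz_def)
    have zd: "z \<in> ball p \<delta>" and fzd: "f z \<in> ball p \<delta>" using z rin fin by auto
    have segd: "closed_segment z (f z) \<subseteq> ball p \<delta>"
      using zd fzd by (simp add: closed_segment_subset)
    have segdist: "norm (x - z) \<le> norm gz" if "x \<in> closed_segment z (f z)" for x
      using dist_in_closed_segment[OF that] by (simp add: dist_norm gz_def norm_minus_commute)
    define V where "V = ball p \<delta> \<inter> ball z (2 * norm gz)"
    have openV: "open V" and convV: "convex V" by (auto simp: V_def convex_Int)
    have Vd: "V \<subseteq> ball p \<delta>" by (auto simp: V_def)
    have gnz: "f x - x \<noteq> 0" if "x \<in> V" for x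
    proof
      assume h: "f x - x = 0"
      have "norm ((f x - x) - gz) \<le> \<eta> * norm (x - z)"
        using lip[of x z] that zd by (auto simp: V_def gz_def)
      also have "\<dots> \<le> 1/2 * norm (x - z)" using \<eta> by (intro mult_right_mono) auto
      also have "\<dots> < norm gz" using that by (auto simp: V_def dist_norm norm_minus_commute)
      finally show False using h by simp
    qed
    have segV: "closed_segment z (f z) \<subseteq> V"
    proof
      fix x assume x: "x \<in> closed_segment z (f z)"
      have "norm (z - x) < 2 * norm gz" using segdist[OF x] gz0(2) norm_minus_commute[of z x] by linarith
      then show "x \<in> V" using x segd by (auto simp: V_def dist_norm)
    qed
    have wholo: "buff_form f holomorphic_on V"
    proof -
      have "(buff_factor \<circ> deriv f) holomorphic_on V"
      proof (rule holomorphic_on_compose_gen[OF _ bf_holo])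
        show "deriv f holomorphic_on V" using dholo Vd \<delta>(2) holomorphic_on_subset by blast
        show "deriv f ` V \<subseteq> ball 1 (1/2)"
          using d\<eta> Vd \<eta>(2) by (force simp: dist_norm norm_minus_commute)
      qed
      moreover have "(\<lambda>x. f x - x) holomorphic_on V"
        using holU Vd \<delta>(2) by (intro holomorphic_intros) (meson holomorphic_on_subset order_trans)
      ultimately have "(\<lambda>x. (buff_factor \<circ> deriv f) x / (f x - x)) holomorphic_on V"
        using gnz by (intro holomorphic_on_divide) (auto simp: o_def)
      then show ?thesis by (simp add: buff_form_def[abs_def] o_def)
    qed
    obtain \<Phi> where \<Phi>w: "\<And>x. x \<in> V \<Longrightarrow> (\<Phi> has_field_derivative buff_form f x) (at x within V)"
      using holomorphic_convex_primitive'[OF convV openV wholo] by blast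
    have \<Phi>: "(\<Phi> has_field_derivative buff_form f x) (at x)" if "x \<in> V" for x
      using \<Phi>w[OF that] at_within_open[OF that openV] by simp
    have \<gamma>eq: "seg_pt f z = linepath z (f z)"
      by (auto simp: seg_pt_def linepath_def scaleR_conv_of_real fun_eq_iff)
    have \<gamma>in: "seg_pt f z s \<in> closed_segment z (f z)" if "s \<in> {0..1}" for s
      using linepath_in_path[OF that] \<gamma>eq by simp
    have \<gamma>0: "seg_pt f z 0 = z" by (simp add: seg_pt_def)
    have \<gamma>t: "seg_pt f z t - z = of_real t * gz" for t
      by (simp add: seg_pt_def gz_def algebra_simps)
    have intg: "(buff_form f has_contour_integral (\<Phi> (seg_pt f z t) - \<Phi> z)) (linepath z (seg_pt f z t))"
      if "t \<in> {0..1}" for t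
    proof -
      have "closed_segment z (seg_pt f z t) \<subseteq> V"
        using segV \<gamma>in[OF that] by (meson closed_segment_subset convV ends_in_segment(1) subsetD)
      then show ?thesis
        using contour_integral_primitive[of V \<Phi> "buff_form f" "linepath z (seg_pt f z t)"] \<Phi>w
        by auto
    qed
    have uval: "u_ft f t z = \<Phi> (seg_pt f z t) - \<Phi> z - of_real t" if "t \<in> {0..1}" for t
      using contour_integral_unique[OF intg[OF that]] by (simp add: u_ft_def)
    have ubnd: "cmod (u_ft f t z) < \<epsilon> * t" if t: "t \<in> {0<..1}" for t
    proof -
      have t01: "t \<in> {0..1}" using t by auto
      let ?h = "\<lambda>x. buff_form f x - 1/gz"
      have "(?h has_contour_integral ((\<Phi> (seg_pt f z t) - \<Phi> z) - (1/gz) * (seg_pt f z t - z)))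
              (linepath z (seg_pt f z t))"
        by (rule has_contour_integral_diff[OF intg[OF t01] has_contour_integral_const_linepath])
      moreover have "(1/gz) * (seg_pt f z t - z) = of_real t" using gz0 by (simp add: \<gamma>t)
      ultimately have hint: "(?h has_contour_integral u_ft f t z) (linepath z (seg_pt f z t))"
        using uval[OF t01] by simp
      have bnd: "norm (?h x) \<le> (\<epsilon>/2)/norm gz" if x: "x \<in> closed_segment z (seg_pt f z t)" for x
      proof -
        have xs: "x \<in> closed_segment z (f z)"
          using x \<gamma>in[OF t01] by (meson closed_segment_subset convex_closed_segment ends_in_segment(1) subsetD)
        have xd: "x \<in> ball p \<delta>" using xs segd by blast
        have "dist (deriv f x) 1 < \<eta>1" using d\<eta>[OF xd] \<eta>(4) by (simp add: dist_norm)
        then have b: "norm (buff_factor (deriv f x) - 1) \<le> \<epsilon>/8"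
          using \<eta>1(2) by (simp add: dist_norm less_imp_le)
        have "norm ((f x - x) - gz) \<le> \<eta> * norm (x - z)" using lip[OF xd zd] by (simp add: gz_def)
        also have "\<dots> \<le> \<eta> * norm gz" using segdist[OF xs] \<eta>(1) by (intro mult_left_mono) auto
        finally have "norm ((f x - x) - gz) \<le> \<eta> * norm gz" .
        from alg[OF gz0(1) b this \<eta>(2,3)] show ?thesis by (simp add: buff_form_def)
      qed
      have "norm (u_ft f t z) \<le> (\<epsilon>/2)/norm gz * norm (seg_pt f z t - z)"
        by (rule has_contour_integral_bound_linepath[OF hint _ bnd]) (use eps gz0 in auto)
      also have "\<dots> = \<epsilon> * t / 2" using gz0 t by (simp add: \<gamma>t norm_mult)
      also have "\<dots> < \<epsilon> * t" using eps t by simp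
      finally show ?thesis .
    qed
    show "cmod (u_ft f t z) < \<epsilon> * t" if "t \<in> {0<..1}" for t using ubnd that by blast
    have contV: "continuous_on V \<Phi>"
      using \<Phi> by (meson DERIV_isCont continuous_at_imp_continuous_on)
    have \<gamma>cont: "continuous_on {0..1} (seg_pt f z)"
      unfolding seg_pt_def by (intro continuous_intros)
    have lift_ex: "is_lift (buff_form f) (seg_pt f z) (\<Phi> \<circ> seg_pt f z)"
      unfolding is_lift_def
    proof (intro conjI ballI)
      show "continuous_on {0..1} (\<Phi> \<circ> seg_pt f z)"
        by (rule continuous_on_compose[OF \<gamma>cont continuous_on_subset[OF contV]]) (use \<gamma>in segV in auto)
      fix t :: real assume t: "t \<in> {0..1}"
      show "\<exists>V \<Phi>'. open V \<and> seg_pt f z t \<in> V \<and>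
        (\<forall>y\<in>V. (\<Phi>' has_field_derivative buff_form f y) (at y)) \<and>
        (\<exists>e>0. \<forall>s\<in>{0..1}. \<bar>s - t\<bar> < e \<longrightarrow> seg_pt f z s \<in> V \<and> (\<Phi> \<circ> seg_pt f z) s = \<Phi>' (seg_pt f z s))"
        using openV \<gamma>in segV \<Phi> t by (intro exI[of _ V] exI[of _ \<Phi>]) (auto intro!: exI[of _ 1])
    qed
    show "\<exists>Z. is_lift (buff_form f) (seg_pt f z) Z" using lift_ex by blast
    have \<gamma>der: "(seg_pt f z has_vector_derivative gz) (at s within {0..1})" for s
      unfolding \<gamma>eq gz_def by (rule has_vector_derivative_linepath_within)
    show "\<forall>Z. is_lift (buff_form f) (seg_pt f z) Z \<longrightarrow>
                   (\<forall>t\<in>{0<..1}. cmod (Z t - (Z 0 + of_real t)) < \<epsilon> * t)"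
    proof (intro allI impI)
    fix Z assume lift: "is_lift (buff_form f) (seg_pt f z) Z"
    have Dder: "((\<lambda>s. Z s - \<Phi> (seg_pt f z s)) has_derivative (\<lambda>h. 0)) (at s within {0..1})"
      if s: "s \<in> {0..1}" for s
    proof -
      obtain V' \<Phi>' e where V': "open V'" "seg_pt f z s \<in> V'"
        "\<And>y. y \<in> V' \<Longrightarrow> (\<Phi>' has_field_derivative buff_form f y) (at y)"
        "e > 0" "\<And>s'. s' \<in> {0..1} \<Longrightarrow> \<bar>s' - s\<bar> < e \<Longrightarrow> seg_pt f z s' \<in> V' \<and> Z s' = \<Phi>' (seg_pt f z s')"
        using lift s unfolding is_lift_def by metis
      have "((\<Phi>' \<circ> seg_pt f z) has_vector_derivative (gz * buff_form f (seg_pt f z s))) (at s within {0..1})"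
        by (rule field_vector_diff_chain_within[OF \<gamma>der has_field_derivative_at_within[OF V'(3)[OF V'(2)]]])
      then have Zd: "(Z has_vector_derivative (gz * buff_form f (seg_pt f z s))) (at s within {0..1})"
        by (rule has_vector_derivative_transform_within[OF _ V'(4) s]) (use V'(5) in \<open>auto simp: dist_real_def\<close>)
      have "((\<Phi> \<circ> seg_pt f z) has_vector_derivative (gz * buff_form f (seg_pt f z s))) (at s within {0..1})"
        using \<gamma>in[OF s] segV
        by (intro field_vector_diff_chain_within[OF \<gamma>der has_field_derivative_at_within[OF \<Phi>]]) auto
      from has_vector_derivative_diff[OF Zd this]
      have "((\<lambda>s. Z s - (\<Phi> \<circ> seg_pt f z) s) has_vector_derivative 0) (at s within {0..1})" by simp
      then show ?thesis by (simp add: has_vector_derivative_def o_def)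
    qed
    obtain c where c: "\<And>s. s \<in> {0..1} \<Longrightarrow> Z s - \<Phi> (seg_pt f z s) = c"
      using has_derivative_zero_constant[OF convex_real_interval(5) Dder] by blast
    show "\<forall>t\<in>{0<..1}. cmod (Z t - (Z 0 + of_real t)) < \<epsilon> * t"
    proof
      fix t :: real assume t: "t \<in> {0<..1}"
      have t01: "t \<in> {0..1}" using t by auto
      have "Z t - (Z 0 + of_real t) = u_ft f t z"
        using c[OF t01] c[of 0] uval[OF t01] \<gamma>0 by (simp add: algebra_simps)
      then show "cmod (Z t - (Z 0 + of_real t)) < \<epsilon> * t" using ubnd t by simp
    qed
    qed
  qed
qed

end
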